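(* Let $p^*\in[0,1]$ satisfy $\varphi(p^* )=p^*$ and $0<\varphi'(p^* )<1$. There exist $\varepsilon,\delta>0$ such that for all sufficiently large $n$ the following holds. Let $X^+(0)\supseteq X^-(0)$ be two configurations in $\mathcal G_n$ differing in exactly one pair $e$, and suppose that for both configurations $Y\in\{X^+(0),X^-(0)\}$, all $G\in\mathcal H_L$ and all pairs $e'$, $|r_G(Y,e')-p^*|<\varepsilon$. Then one step of the Glauber dynamics from $X^+(0)$ and from $X^-(0)$ can be coupled (via the standard monotone coupling: same chosen pair, same uniform random variable for the update) so that $$\mathbb E\, d_H(X^+(1),X^-(1))\le 1-\delta n^{-2},$$ where $d_H$ is the Hamming distance (number of pairs in the symmetric difference).
   Context: Fix an integer $s\ge 1$, graphs $G_1,\dots,G_s$ where $G_i$ has vertex set $V_i=\{1,\dots,|V_i|\}$ and edge set $E_i$, with $G_1$ the single edge on $\{1,2\}$, and an integer $L\ge\max_i|V_i|$. Fix $\beta=(\beta_1,\dots,\beta_s)$ with $\beta_1\in\mathbb R$, $\beta_i>0$ for $i\ge 2$. $\mathcal G_n$ is the set of simple graphs on $[n]$ (a graph is its edge set). For a graph $G=(V,E)$, $V=\{1,\dots,m\}$, and $X\in\mathcal G_n$: $N_G(X)$ is the number of injective $\sigma:V\to[n]$ with $\{\sigma(i),\sigma(j)\}\in X$ for all $\{i,j\}\in E$; for a pair $e\in\binom{[n]}2$, $N_G(X,e)$ is the number of injective $\sigma:V\to[n]$ such that $\{\sigma(i),\sigma(j)\}\in X\cup\{e\}$ for all $\{i,j\}\in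 E$ and $e=\{\sigma(i),\sigma(j)\}$ for some $\{i,j\}\in E$. Gibbs measure $p_n(X)\propto\exp(H(X))$, $H(X)=\sum_i\beta_iN_{G_i}(X)/n^{|V_i|-2}$. Glauber dynamics: from $X$, pick a pair $e$ uniformly among the $\binom n2$ pairs, move to $X\cup\{e\}$ with probability $e^{\partial_eH(X)}/(1+e^{\partial_eH(X)})$, where $\partial_eH(X)=H(X\cup\{e\})-H(X\setminus\{e\})$, and to $X\setminus\{e\}$ otherwise. $\Psi(p)=\sum_{i=1}^s2\beta_i|E_i|p^{|E_i|-1}$, $\varphi(p)=e^{\Psi(p)}/(1+e^{\Psi(p)})$. $\mathcal H_L$ is the set of graphs with at most $L$ vertices and at least $2$ edges. For $G=(V,E)\in\mathcal H_L$: $r_G(X,e)=\big(N_G(X,e)/(2|E|n^{|V|-2})\big)^{1/(|E|-1)}$. *)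

theory Defs
  imports "HOL-Probability.Probability"
begin

text \<open>Pairs (potential edges) on the vertex set [n] = {1..n}; a simple graph on [n] is a subset.\<close>
definition pairs :: "nat \<Rightarrow> nat set set" where
  "pairs n = {e. \<exists>i j. i \<in> {1..n} \<and> j \<in> {1..n} \<and> i \<noteq> j \<and> e = {i, j}}"

text \<open>A pattern graph is a pair (m, E): vertex set {1..m}, edge set E of 2-subsets of {1..m}.\<close>
type_synonym pgraph = "nat \<times> nat set set"

definition is_graph :: "pgraph \<Rightarrow> bool" where
  "is_graph G \<longleftrightarrow> snd G \<subseteq> pairs (fst G)"

definition Ncount :: "nat \<Rightarrow> pgraph \<Rightarrow> nat set set \<Rightarrow> nat" where
  "Ncount n G X = card {\<sigma> \<in> {1..fst G} \<rightarrow>\<^sub>E {1..n}. inj_on \<sigma> {1..fst G} \<and>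
                          (\<forall>ed \<in> snd G. \<sigma> ` ed \<in> X)}"

definition Ncount_e :: "nat \<Rightarrow> pgraph \<Rightarrow> nat set set \<Rightarrow> nat set \<Rightarrow> nat" where
  "Ncount_e n G X e = card {\<sigma> \<in> {1..fst G} \<rightarrow>\<^sub>E {1..n}. inj_on \<sigma> {1..fst G} \<and>
                          (\<forall>ed \<in> snd G. \<sigma> ` ed \<in> X \<union> {e}) \<and> (\<exists>ed \<in> snd G. \<sigma> ` ed = e)}"

definition Ham :: "nat \<Rightarrow> (nat \<Rightarrow> pgraph) \<Rightarrow> (nat \<Rightarrow> real) \<Rightarrow> nat \<Rightarrow> nat set set \<Rightarrow> real" where
  "Ham s Gs \<beta> n X = (\<Sum>i=1..s. \<beta> i * real (Ncount n (Gs i) X) / real n powr (real (fst (Gs i)) - 2))"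

definition Psi :: "nat \<Rightarrow> (nat \<Rightarrow> pgraph) \<Rightarrow> (nat \<Rightarrow> real) \<Rightarrow> real \<Rightarrow> real" where
  "Psi s Gs \<beta> p = (\<Sum>i=1..s. 2 * \<beta> i * real (card (snd (Gs i))) * p ^ (card (snd (Gs i)) - 1))"

definition phi :: "nat \<Rightarrow> (nat \<Rightarrow> pgraph) \<Rightarrow> (nat \<Rightarrow> real) \<Rightarrow> real \<Rightarrow> real" where
  "phi s Gs \<beta> p = exp (Psi s Gs \<beta> p) / (1 + exp (Psi s Gs \<beta> p))"

definition HL :: "nat \<Rightarrow> pgraph set" where
  "HL L = {G. is_graph G \<and> fst G \<le> L \<and> card (snd G) \<ge> 2}"

definition rG :: "nat \<Rightarrow> pgraph \<Rightarrow> nat set set \<Rightarrow> nat set \<Rightarrow> real" where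
  "rG n G X e = (real (Ncount_e n G X e) /
       (2 * real (card (snd G)) * real n powr (real (fst G) - 2))) powr (1 / (real (card (snd G)) - 1))"

definition glauber_step :: "nat \<Rightarrow> (nat \<Rightarrow> pgraph) \<Rightarrow> (nat \<Rightarrow> real) \<Rightarrow> nat \<Rightarrow>
     nat set set \<Rightarrow> nat set \<Rightarrow> real \<Rightarrow> nat set set" where
  "glauber_step s Gs \<beta> n X e u =
     (let d = Ham s Gs \<beta> n (insert e X) - Ham s Gs \<beta> n (X - {e})
      in if u \<le> exp d / (1 + exp d) then insert e X else X - {e})"

definition hamming :: "nat set set \<Rightarrow> nat set set \<Rightarrow> nat" where
  "hamming A B = card ((A - B) \<union> (B - A))"

definition coupled_exp_dist :: "nat \<Rightarrow> (nat \<Rightarrow> pgraph) \<Rightarrow> (nat \<Rightarrow> real) \<Rightarrow> nat \<Rightarrow>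
     nat set set \<Rightarrow> nat set set \<Rightarrow> real" where
  "coupled_exp_dist s Gs \<beta> n Xp Xm =
     measure_pmf.expectation (pmf_of_set (pairs n)) (\<lambda>e.
        integral\<^sup>L (uniform_measure lborel {0..1::real})
          (\<lambda>u. real (hamming (glauber_step s Gs \<beta> n Xp e u) (glauber_step s Gs \<beta> n Xm e u))))"

end

theory Submission
  imports Defs
begin



definition SE :: "nat \<Rightarrow> pgraph \<Rightarrow> nat set set \<Rightarrow> nat set \<Rightarrow> (nat \<Rightarrow> nat) set" where
 "SE n G X e = {\<sigma> \<in> {1..fst G} \<rightarrow>\<^sub>E {1..n}. inj_on \<sigma> {1..fst G} \<and>
     (\<forall>ed\<in>snd G. \<sigma> ` ed \<in> X \<union> {e}) \<and> (\<exists>ed\<in>snd G. \<sigma> ` ed = e)}"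

lemma Ncount_e_SE: "Ncount_e n G X e = card (SE n G X e)"
  by (simp add: Ncount_e_def SE_def)

lemma finite_SE[simp]: "finite (SE n G X e)"
  unfolding SE_def by (rule finite_subset[of _ "{1..fst G} \<rightarrow>\<^sub>E {1..n}"]) (auto intro: finite_PiE)

lemma pairs_sub: "ed \<in> pairs m \<Longrightarrow> ed \<subseteq> {1..m}"
  by (auto simp: pairs_def)

lemma finite_pairs[simp]: "finite (pairs n)"
  by (rule finite_subset[of _ "Pow {1..n}"]) (auto simp: pairs_def)

lemma Ncount_decomp: "Ncount n G (insert e Y) = Ncount n G (Y - {e}) + Ncount_e n G Y e"
proof -
  let ?P = "{1..fst G} \<rightarrow>\<^sub>E {1..n}"
  let ?A = "{\<sigma>\<in>?P. inj_on \<sigma> {1..fst G} \<and> (\<forall>ed\<in>snd G. \<sigma>`ed \<in> insert e Y)}"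
  let ?B = "{\<sigma>\<in>?P. inj_on \<sigma> {1..fst G} \<and> (\<forall>ed\<in>snd G. \<sigma>`ed \<in> Y - {e})}"
  have eq: "?A = ?B \<union> SE n G Y e"
  proof (rule set_eqI)
    fix \<sigma>
    show "\<sigma> \<in> ?A \<longleftrightarrow> \<sigma> \<in> ?B \<union> SE n G Y e"
    proof
      assume A: "\<sigma> \<in> ?A"
      show "\<sigma> \<in> ?B \<union> SE n G Y e"
      proof (cases "\<forall>ed\<in>snd G. \<sigma>`ed \<in> Y - {e}")
        case True then show ?thesis using A by simp
      next
        case False
        then obtain ed where "ed \<in> snd G" "\<sigma>`ed \<notin> Y - {e}" by blast
        moreover have "\<sigma>`ed \<in> insert e Y" using A calculation(1) by simp
        ultimately have "\<sigma>`ed = e" by blast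
        then show ?thesis using A \<open>ed \<in> snd G\<close> unfolding SE_def by auto
      qed
    next
      assume "\<sigma> \<in> ?B \<union> SE n G Y e"
      then show "\<sigma> \<in> ?A" unfolding SE_def by auto
    qed
  qed
  have dj: "?B \<inter> SE n G Y e = {}" unfolding SE_def by auto
  have fB: "finite ?B" by (rule finite_subset[of _ ?P]) (auto intro: finite_PiE)
  have "card ?A = card ?B + card (SE n G Y e)"
    unfolding eq by (rule card_Un_disjoint[OF fB finite_SE dj])
  then show ?thesis by (simp add: Ncount_def Ncount_e_SE)
qed

lemma SE_mono: "Xm \<subseteq> Xp \<Longrightarrow> SE n G Xm e \<subseteq> SE n G Xp e"
  unfolding SE_def by blast

lemma SE_diff_sub:
  assumes G: "snd G \<subseteq> pairs (fst G)" and "Xm \<subseteq> Xp" "Xp - Xm = {e}" "e' \<noteq> e"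
  shows "SE n G Xp e' - SE n G Xm e' \<subseteq> (\<Union>b\<in>snd G. {\<sigma> \<in> SE n (fst G, snd G - {b}) Xp e. \<sigma>`b = e'})"
proof
  fix \<sigma> assume s: "\<sigma> \<in> SE n G Xp e' - SE n G Xm e'"
  then have s1: "\<sigma> \<in> SE n G Xp e'" and s2: "\<sigma> \<notin> SE n G Xm e'" by simp_all
  from s1 have P: "\<sigma> \<in> {1..fst G} \<rightarrow>\<^sub>E {1..n}" and inj: "inj_on \<sigma> {1..fst G}"
    and all: "\<forall>ed\<in>snd G. \<sigma> ` ed \<in> Xp \<union> {e'}" and ex: "\<exists>ed\<in>snd G. \<sigma> ` ed = e'"
    unfolding SE_def mem_Collect_eq by simp_all
  from ex obtain b where b: "b \<in> snd G" "\<sigma>`b = e'" by blast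
  from s2 have "\<not> (\<sigma> \<in> {1..fst G} \<rightarrow>\<^sub>E {1..n} \<and> inj_on \<sigma> {1..fst G} \<and>
     (\<forall>ed\<in>snd G. \<sigma> ` ed \<in> Xm \<union> {e'}) \<and> (\<exists>ed\<in>snd G. \<sigma> ` ed = e'))"
    unfolding SE_def mem_Collect_eq by simp
  with P inj ex have "\<not> (\<forall>ed\<in>snd G. \<sigma> ` ed \<in> Xm \<union> {e'})" by (simp only: simp_thms)
  then obtain a where a: "a \<in> snd G" "\<sigma>`a \<notin> Xm \<union> {e'}" by blast
  have "\<sigma>`a \<in> Xp \<union> {e'}" using all a(1) by blast
  with a(2) have "\<sigma>`a \<in> Xp - Xm" by blast
  then have ae: "\<sigma>`a = e" using assms(3) by simp
  with b assms(4) have ab: "a \<noteq> b" by auto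
  have sub: "ed \<in> snd G \<Longrightarrow> ed \<subseteq> {1..fst G}" for ed using G pairs_sub by blast
  have "\<forall>c\<in>snd G - {b}. \<sigma>`c \<in> Xp \<union> {e}"
  proof
    fix c assume c: "c \<in> snd G - {b}"
    have "\<sigma>`c \<noteq> e'"
    proof
      assume "\<sigma>`c = e'"
      then have "\<sigma>`c = \<sigma>`b" using b by simp
      then have "c = b" using inj_on_image_eq_iff[OF inj sub sub] c b by blast
      with c show False by simp
    qed
    moreover have "\<sigma>`c \<in> Xp \<union> {e'}" using all c by blast
    ultimately show "\<sigma>`c \<in> Xp \<union> {e}" by blast
  qed
  moreover have "\<exists>ed\<in>snd G - {b}. \<sigma>`ed = e" using a ae ab by blast
  ultimately have "\<sigma> \<in> SE n (fst G, snd G - {b}) Xp e" using P inj unfolding SE_def by simp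
  with b show "\<sigma> \<in> (\<Union>b\<in>snd G. {\<sigma> \<in> SE n (fst G, snd G - {b}) Xp e. \<sigma>`b = e'})" by blast
qed

lemma finite_edges: "snd G \<subseteq> pairs (fst G) \<Longrightarrow> finite (snd G)"
  using finite_pairs finite_subset by blast

lemma diffsum:
  assumes G: "snd G \<subseteq> pairs (fst G)" and "Xm \<subseteq> Xp" "Xp - Xm = {e}"
  shows "(\<Sum>e'\<in>pairs n - {e}. card (SE n G Xp e' - SE n G Xm e'))
      \<le> (\<Sum>b\<in>snd G. Ncount_e n (fst G, snd G - {b}) Xp e)"
proof -
  have finE: "finite (snd G)" using G by (rule finite_edges)
  let ?U = "\<lambda>b. SE n (fst G, snd G - {b}) Xp e"
  have "(\<Sum>e'\<in>pairs n - {e}. card (SE n G Xp e' - SE n G Xm e'))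
     \<le> (\<Sum>e'\<in>pairs n - {e}. \<Sum>b\<in>snd G. card {\<sigma> \<in> ?U b. \<sigma>`b = e'})"
  proof (rule sum_mono)
    fix e' assume "e' \<in> pairs n - {e}"
    then have ne: "e' \<noteq> e" by auto
    have "card (SE n G Xp e' - SE n G Xm e') \<le> card (\<Union>b\<in>snd G. {\<sigma> \<in> ?U b. \<sigma>`b = e'})"
      by (rule card_mono[OF _ SE_diff_sub[OF assms ne]]) (simp add: finE)
    also have "\<dots> \<le> (\<Sum>b\<in>snd G. card {\<sigma> \<in> ?U b. \<sigma>`b = e'})"
      by (rule card_UN_le[OF finE])
    finally show "card (SE n G Xp e' - SE n G Xm e') \<le> (\<Sum>b\<in>snd G. card {\<sigma> \<in> ?U b. \<sigma>`b = e'})" .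
  qed
  also have "\<dots> = (\<Sum>b\<in>snd G. \<Sum>e'\<in>pairs n - {e}. card {\<sigma> \<in> ?U b. \<sigma>`b = e'})"
    by (rule sum.swap)
  also have "\<dots> \<le> (\<Sum>b\<in>snd G. card (?U b))"
  proof (rule sum_mono)
    fix b
    have "(\<Sum>e'\<in>pairs n - {e}. card {\<sigma> \<in> ?U b. \<sigma>`b = e'})
        = card (\<Union>e'\<in>pairs n - {e}. {\<sigma> \<in> ?U b. \<sigma>`b = e'})"
      by (rule card_UN_disjoint[symmetric]) auto
    also have "\<dots> \<le> card (?U b)" by (rule card_mono) auto
    finally show "(\<Sum>e'\<in>pairs n - {e}. card {\<sigma> \<in> ?U b. \<sigma>`b = e'}) \<le> card (?U b)" .
  qed
  finally show ?thesis by (simp add: Ncount_e_SE)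
qed



definition SS :: "nat \<Rightarrow> nat \<Rightarrow> nat set \<Rightarrow> nat set \<Rightarrow> (nat \<Rightarrow> nat) set" where
  "SS n m c e = {\<sigma> \<in> {1..m} \<rightarrow>\<^sub>E {1..n}. inj_on \<sigma> {1..m} \<and> \<sigma>`c = e}"

lemma card_PiE_two:
  assumes "i \<in> {1..m}" "j \<in> {1..m}" "i \<noteq> j" "u \<in> {1..n}" "v \<in> {1..n}"
  shows "card (PiE {1..m} (\<lambda>k. if k = i then {u} else if k = j then {v} else {1..n})) = n ^ (m - 2)"
proof -
  have "card (PiE {1..m} (\<lambda>k. if k = i then {u} else if k = j then {v} else {1..n}))
     = (\<Prod>k\<in>{1..m}. card (if k = i then {u} else if k = j then {v} else {1..n}))"
    by (rule card_PiE) simp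
  also have "\<dots> = (\<Prod>k\<in>{1..m}. if k \<in> {i,j} then 1 else n)"
    by (rule prod.cong) auto
  also have "\<dots> = (\<Prod>k\<in>{1..m} \<inter> {k. k \<in> {i,j}}. 1) * (\<Prod>k\<in>{1..m} \<inter> - {k. k \<in> {i,j}}. n)"
    by (rule prod.If_cases) simp
  also have "\<dots> = n ^ card ({1..m} \<inter> - {k. k \<in> {i,j}})" by simp
  also have "{1..m} \<inter> - {k. k \<in> {i,j}} = {1..m} - {i,j}" by auto
  also have "card ({1..m} - {i,j}) = m - 2" using assms by (subst card_Diff_subset) auto
  finally show ?thesis .
qed

lemma pairsE: assumes "e \<in> pairs n" obtains x y where "x \<in> {1..n}" "y \<in> {1..n}" "x \<noteq> y" "e = {x,y}"
  using assms unfolding pairs_def by blast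

lemma SS_upper:
  assumes c: "c \<in> pairs m" and e: "e \<in> pairs n"
  shows "card (SS n m c e) \<le> 2 * n ^ (m - 2)"
proof -
  obtain i j where ij: "i \<in> {1..m}" "j \<in> {1..m}" "i \<noteq> j" "c = {i,j}" using c by (rule pairsE)
  obtain x y where xy: "x \<in> {1..n}" "y \<in> {1..n}" "x \<noteq> y" "e = {x,y}" using e by (rule pairsE)
  define F where "F u v = PiE {1..m} (\<lambda>k. if k = i then {u} else if k = j then {v} else {1..n})" for u v
  have sub: "SS n m c e \<subseteq> F x y \<union> F y x"
  proof
    fix \<sigma> assume s: "\<sigma> \<in> SS n m c e"
    then have P: "\<sigma> \<in> {1..m} \<rightarrow>\<^sub>E {1..n}" and inj: "inj_on \<sigma> {1..m}" and im: "\<sigma>`c = e"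
      unfolding SS_def by simp_all
    have "\<sigma> i \<noteq> \<sigma> j" using inj ij inj_on_contraD by metis
    have "{\<sigma> i, \<sigma> j} = {x, y}" using im ij xy by simp
    then have cases: "(\<sigma> i = x \<and> \<sigma> j = y) \<or> (\<sigma> i = y \<and> \<sigma> j = x)" by (simp add: doubleton_eq_iff)
    have ext: "\<sigma> \<in> extensional {1..m}" using P by (simp add: PiE_iff)
    have rng: "\<forall>k\<in>{1..m}. \<sigma> k \<in> {1..n}" using P by (simp add: PiE_iff)
    from cases show "\<sigma> \<in> F x y \<union> F y x"
    proof
      assume h: "\<sigma> i = x \<and> \<sigma> j = y"
      have "\<sigma> \<in> F x y" unfolding F_def PiE_iff using ext rng h by auto
      then show ?thesis by simp
    next
      assume h: "\<sigma> i = y \<and> \<sigma> j = x"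
      have "\<sigma> \<in> F y x" unfolding F_def PiE_iff using ext rng h by auto
      then show ?thesis by simp
    qed
  qed
  have fin: "finite (F u v)" for u v unfolding F_def by (rule finite_PiE) auto
  have "card (SS n m c e) \<le> card (F x y \<union> F y x)" by (rule card_mono) (use fin sub in auto)
  also have "\<dots> \<le> card (F x y) + card (F y x)" by (rule card_Un_le)
  also have "\<dots> = 2 * n ^ (m - 2)" unfolding F_def using card_PiE_two[OF ij(1-3)] xy by simp
  finally show ?thesis .
qed

lemma prod_lower: "(m::nat) \<le> N \<Longrightarrow> (N - m) ^ m \<le> prod ((-) N) {0..<m}"
proof -
  have "(\<Prod>t\<in>{0..<m}. N - m) \<le> prod ((-) N) {0..<m}"
    by (rule prod_mono) auto
  then show "(N - m) ^ m \<le> prod ((-) N) {0..<m}" by simp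
qed

lemma SS_lower:
  assumes c: "c \<in> pairs m" and e: "e \<in> pairs n"
  shows "2 * (n - m) ^ (m - 2) \<le> card (SS n m c e)"
proof -
  obtain i j where ij: "i \<in> {1..m}" "j \<in> {1..m}" "i \<noteq> j" "c = {i,j}" using c by (rule pairsE)
  obtain x y where xy: "x \<in> {1..n}" "y \<in> {1..n}" "x \<noteq> y" "e = {x,y}" using e by (rule pairsE)
  define A where "A = {1..m} - {i,j}"
  define C where "C = {1..n} - {x,y}"
  define T where "T = {\<tau> \<in> A \<rightarrow>\<^sub>E C. inj_on \<tau> A}"
  define f where "f u v \<tau> = \<tau>(i := u, j := v)" for u v and \<tau> :: "nat \<Rightarrow> nat"
  have cA: "card A = m - 2" unfolding A_def using ij by (subst card_Diff_subset) auto
  have cC: "card C = n - 2" unfolding C_def using xy by (subst card_Diff_subset) auto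
  have cT: "card T = prod ((-) (n - 2)) {0..<m - 2}"
    unfolding T_def using card_inj_on_subset_funcset[of A C A] cA cC
    by (simp add: A_def C_def)
  have cT2: "(n - m) ^ (m - 2) \<le> card T"
  proof (cases "m \<le> n")
    case True
    then have h1: "(n - 2 - (m - 2)) ^ (m - 2) \<le> card T" unfolding cT by (intro prod_lower) simp
    have m2: "m \<ge> 2" using ij by auto
    have "n - 2 - (m - 2) = n - m" using m2 True by arith
    with h1 show ?thesis by simp
  next
    case False
    then have "m - 2 > 0" using xy by auto
    then have "(n - m) ^ (m - 2) = 0" using False by (simp add: zero_power)
    then show ?thesis by (simp only:)
  qed
  have ijA: "i \<notin> A" "j \<notin> A" unfolding A_def by auto
  have imgS: "f u v ` T \<subseteq> SS n m c e" if uv: "{u,v} = {x,y}" "u \<noteq> v" for u v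
  proof
    fix \<sigma> assume "\<sigma> \<in> f u v ` T"
    then obtain \<tau> where t: "\<tau> \<in> T" and s: "\<sigma> = \<tau>(i := u, j := v)" unfolding f_def by blast
    from t have tP: "\<tau> \<in> A \<rightarrow>\<^sub>E C" and tinj: "inj_on \<tau> A" unfolding T_def by simp_all
    have uvn: "u \<in> {1..n}" "v \<in> {1..n}" using uv xy by (auto simp: doubleton_eq_iff)
    have tC: "k \<in> A \<Longrightarrow> \<tau> k \<in> C" for k using tP by (auto simp: PiE_iff)
    have tE: "k \<notin> A \<Longrightarrow> \<tau> k = undefined" for k using tP by (auto simp: PiE_iff extensional_def)
    have uvC: "u \<notin> C" "v \<notin> C" unfolding C_def using uv by (auto simp: doubleton_eq_iff)
    have r1: "\<forall>k\<in>{1..m}. \<sigma> k \<in> {1..n}"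
    proof
      fix k assume "k \<in> {1..m}"
      then show "\<sigma> k \<in> {1..n}"
        unfolding s using tC uvn by (cases "k = i"; cases "k = j") (auto simp: A_def C_def)
    qed
    have r2: "\<sigma> \<in> extensional {1..m}"
      unfolding extensional_def s using ij tE by (auto simp: A_def)
    have "\<sigma> \<in> {1..m} \<rightarrow>\<^sub>E {1..n}" using r1 r2 by (simp add: PiE_iff)
    moreover have "inj_on \<sigma> {1..m}"
    proof (rule inj_onI)
      fix a b assume a: "a \<in> {1..m}" and b: "b \<in> {1..m}" and eq: "\<sigma> a = \<sigma> b"
      have val: "k \<in> {1..m} \<Longrightarrow> (k = i \<and> \<sigma> k = u) \<or> (k = j \<and> \<sigma> k = v) \<or> (k \<in> A \<and> \<sigma> k = \<tau> k)" for k
        unfolding s A_def using ij by auto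
      from val[OF a] val[OF b] eq tC uvC uv(2) ij(3) show "a = b"
        using inj_onD[OF tinj] by metis
    qed
    moreover have "\<sigma>`c = e" unfolding s using ij xy uv by auto
    ultimately show "\<sigma> \<in> SS n m c e" unfolding SS_def by simp
  qed
  have injf: "inj_on (f u v) T" for u v
  proof (rule inj_onI)
    fix \<tau> \<tau>' assume t: "\<tau> \<in> T" "\<tau>' \<in> T" and eq: "f u v \<tau> = f u v \<tau>'"
    show "\<tau> = \<tau>'"
    proof
      fix k
      show "\<tau> k = \<tau>' k"
      proof (cases "k = i \<or> k = j")
        case True
        then have "k \<notin> A" using ijA by auto
        then show ?thesis using t by (auto simp: T_def PiE_iff extensional_def)
      next
        case False
        then show ?thesis using fun_cong[OF eq, of k] by (simp add: f_def)
      qed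
    qed
  qed
  have finT: "finite T" unfolding T_def
    by (rule finite_subset[of _ "A \<rightarrow>\<^sub>E C"]) (auto intro!: finite_PiE simp: A_def C_def)
  have dj: "f x y ` T \<inter> f y x ` T = {}"
  proof (rule ccontr)
    assume "f x y ` T \<inter> f y x ` T \<noteq> {}"
    then obtain t1 t2 where "f x y t1 = f y x t2" by blast
    then have "f x y t1 j = f y x t2 j" by simp
    then show False using xy(3) by (simp add: f_def)
  qed
  have "card (f x y ` T \<union> f y x ` T) = card T + card T"
    by (subst card_Un_disjoint) (use finT dj card_image[OF injf] in auto)
  moreover have "card (f x y ` T \<union> f y x ` T) \<le> card (SS n m c e)"
  proof (rule card_mono)
    show "finite (SS n m c e)" unfolding SS_def
      by (rule finite_subset[of _ "{1..m} \<rightarrow>\<^sub>E {1..n}"]) (auto intro: finite_PiE)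
    show "f x y ` T \<union> f y x ` T \<subseteq> SS n m c e"
      using imgS[of x y] imgS[of y x] xy by (auto simp: insert_commute)
  qed
  ultimately show ?thesis using cT2 by linarith
qed



definition sig :: "real \<Rightarrow> real" where "sig x = exp x / (1 + exp x)"
definition sigd :: "real \<Rightarrow> real" where "sigd x = exp x / (1 + exp x)^2"

lemma one_exp_pos: "0 < 1 + exp (x::real)" using exp_gt_zero[of x] by linarith
lemma one_exp_ne: "1 + exp (x::real) \<noteq> 0" using one_exp_pos[of x] by linarith

lemma sig_deriv: "(sig has_real_derivative sigd x) (at x)"
proof -
  have "((\<lambda>x. exp x / (1 + exp x)) has_real_derivative
     (exp x * (1 + exp x) - exp x * exp x) / ((1 + exp x) * (1 + exp x))) (at x)"
    by (rule DERIV_divide) (auto intro!: derivative_eq_intros simp: one_exp_ne)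
  moreover have "(exp x * (1 + exp x) - exp x * exp x) / ((1 + exp x) * (1 + exp x)) = sigd x"
    by (simp add: sigd_def power2_eq_square algebra_simps)
  ultimately show ?thesis unfolding sig_def[abs_def] by simp
qed

lemma sigd_pos: "sigd x > 0" unfolding sigd_def using one_exp_pos[of x] by simp

lemma isCont_sigd: "isCont sigd x"
  unfolding sigd_def[abs_def] by (auto intro!: continuous_intros simp: one_exp_ne)

lemma sig_lip:
  assumes "\<And>z. min a b \<le> z \<Longrightarrow> z \<le> max a b \<Longrightarrow> sigd z \<le> K"
  shows "\<bar>sig a - sig b\<bar> \<le> K * \<bar>a - b\<bar>"
proof -
  have gen: "\<bar>sig v - sig w\<bar> \<le> K * \<bar>v - w\<bar>" if "w < v" "\<And>z. w \<le> z \<Longrightarrow> z \<le> v \<Longrightarrow> sigd z \<le> K" for v w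
  proof -
    obtain z where z: "w < z" "z < v" "sig v - sig w = (v - w) * sigd z"
      using MVT2[OF \<open>w < v\<close>, of sig sigd] sig_deriv by blast
    have "sigd z \<le> K" using that z by auto
    moreover have "sigd z > 0" by (rule sigd_pos)
    ultimately show ?thesis using z \<open>w < v\<close>
      by (simp add: abs_mult mult_right_mono)
  qed
  consider "a < b" | "a = b" | "b < a" by linarith
  then show ?thesis
  proof cases
    case 1
    then show ?thesis using gen[of a b] assms by (simp add: abs_minus_commute)
  next
    case 2 then show ?thesis by simp
  next
    case 3 then show ?thesis using gen[of b a] assms by simp
  qed
qed

lemma powdiff:
  fixes x y M :: real
  assumes "0 \<le> x" "x \<le> M" "0 \<le> y" "y \<le> M"
  shows "\<bar>x^j - y^j\<bar> \<le> real j * M^(j-1) * \<bar>x - y\<bar>"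
proof -
  have eq: "\<bar>x^j - y^j\<bar> = \<bar>x - y\<bar> * \<bar>\<Sum>i<j. y^(j - Suc i) * x^i\<bar>"
    by (simp add: power_diff_sumr2 abs_mult)
  have S: "\<bar>\<Sum>i<j. y^(j - Suc i) * x^i\<bar> \<le> real j * M^(j-1)"
  proof -
    have "\<bar>\<Sum>i<j. y^(j - Suc i) * x^i\<bar> = (\<Sum>i<j. y^(j - Suc i) * x^i)"
      using assms by (intro abs_of_nonneg sum_nonneg) auto
    also have "\<dots> \<le> (\<Sum>i<j. M^(j - Suc i) * M^i)"
      using assms by (intro sum_mono mult_mono power_mono) auto
    also have "\<dots> = (\<Sum>i<j. M^(j-1))"
    proof (rule sum.cong)
      fix i assume "i \<in> {..<j}"
      then have "j - Suc i + i = j - 1" by auto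
      then show "M^(j - Suc i) * M^i = M^(j-1)" by (metis power_add)
    qed simp
    also have "\<dots> = real j * M^(j-1)" by simp
    finally show ?thesis .
  qed
  have "\<bar>x^j - y^j\<bar> \<le> \<bar>x - y\<bar> * (real j * M^(j-1))"
    unfolding eq by (rule mult_left_mono[OF S]) simp
  then show ?thesis by (simp add: mult_ac)
qed



lemma unif_prob: "prob_space (uniform_measure lborel {0..1::real})"
  by (rule prob_space_uniform_measure) auto

lemma meas_unif: "a \<le> b \<Longrightarrow> measure (uniform_measure lborel {0..1::real}) {a<..b} \<le> b - a"
proof -
  assume ab: "a \<le> b"
  have "measure (uniform_measure lborel {0..1::real}) {a<..b} = measure lborel ({0..1} \<inter> {a<..b}) / measure lborel {0..1::real}"
    by (rule measure_uniform_measure) auto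
  also have "\<dots> = measure lborel ({0..1} \<inter> {a<..b})" by simp
  also have "\<dots> \<le> measure lborel {a<..b}"
    by (rule measure_mono_fmeasurable) (use ab in \<open>auto simp: fmeasurable_def\<close>)
  also have "\<dots> = b - a" using ab by simp
  finally show ?thesis .
qed

lemma integral_bound:
  fixes f :: "real \<Rightarrow> real"
  assumes f: "\<And>u. f u \<le> 1 + indicator {a<..b} u" and ab: "a \<le> b"
  shows "integral\<^sup>L (uniform_measure lborel {0..1}) f \<le> 1 + (b - a)"
proof (cases "integrable (uniform_measure lborel {0..1}) f")
  case True
  interpret prob_space "uniform_measure lborel {0..1::real}" by (rule unif_prob)
  have ii: "integrable (uniform_measure lborel {0..1}) (indicator {a<..b} :: real \<Rightarrow> real)"
    by (rule integrable_real_indicator) (simp, use emeasure_finite[of "{a<..b}"] in \<open>auto simp: less_top[symmetric] simp del: emeasure_uniform_measure\<close>)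
  have "integral\<^sup>L (uniform_measure lborel {0..1}) f \<le>
     integral\<^sup>L (uniform_measure lborel {0..1}) (\<lambda>u. 1 + indicator {a<..b} u)"
    by (rule integral_mono[OF True]) (use ii f in auto)
  also have "\<dots> = 1 + measure (uniform_measure lborel {0..1}) {a<..b}"
  proof -
    have pu: "measure (uniform_measure lborel {0..1::real}) UNIV = 1"
      by (subst measure_uniform_measure) auto
    have "integral\<^sup>L (uniform_measure lborel {0..1}) (\<lambda>u. 1 + indicator {a<..b} u) =
      integral\<^sup>L (uniform_measure lborel {0..1}) (\<lambda>u::real. 1::real) + integral\<^sup>L (uniform_measure lborel {0..1}) (indicator {a<..b} :: real \<Rightarrow> real)"
      using ii pu by simp
    then show ?thesis using ii pu by simp
  qed
  also have "\<dots> \<le> 1 + (b - a)" using meas_unif[OF ab] by simp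
  finally show ?thesis .
next
  case False
  then show ?thesis using ab by (simp add: not_integrable_integral_eq)
qed

lemma exp_pmf_set: "finite S \<Longrightarrow> S \<noteq> {} \<Longrightarrow> measure_pmf.expectation (pmf_of_set S) (g :: 'a \<Rightarrow> real) = sum g S / card S"
  by (rule integral_pmf_of_set)


lemma Ncount_e_single: "Ncount_e n (m, {c}) Y e = card (SS n m c e)"
  unfolding Ncount_e_def SS_def by (rule arg_cong[where f=card]) auto

lemma Ncount_e_empty: "Ncount_e n (m, {}) Y e = 0"
  unfolding Ncount_e_def by simp

lemma Ham_diff: "Ham s Gs \<beta> n (insert e Y) - Ham s Gs \<beta> n (Y - {e}) =
   (\<Sum>i=1..s. \<beta> i * real (Ncount_e n (Gs i) Y e) / real n powr (real (fst (Gs i)) - 2))"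
  unfolding Ham_def sum_subtractf[symmetric]
  by (rule sum.cong) (simp_all add: Ncount_decomp diff_divide_distrib[symmetric] algebra_simps)

lemma rG_pow:
  assumes k: "card (snd G) \<ge> 2" and n: "n \<ge> 1"
  shows "real (Ncount_e n G Y e) = 2 * real (card (snd G)) * real n powr (real (fst G) - 2)
           * (rG n G Y e) ^ (card (snd G) - 1)"
proof -
  define k where "k = card (snd G)"
  define np where "np = real n powr (real (fst G) - 2)"
  define x where "x = real (Ncount_e n G Y e) / (2 * real k * np)"
  have np: "np > 0" unfolding np_def using n by simp
  have kpos: "real k > 0" using k unfolding k_def by simp
  have x0: "x \<ge> 0" unfolding x_def using np kpos by simp
  have r: "rG n G Y e = x powr (1 / (real k - 1))" unfolding rG_def x_def k_def np_def by simp
  have rk: "(x powr (1 / (real k - 1))) ^ (k - 1) = x"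
  proof (cases "x = 0")
    case True
    then show ?thesis using k unfolding k_def by simp
  next
    case False
    then have xp: "x > 0" using x0 by simp
    have "(x powr (1 / (real k - 1))) ^ (k - 1) = (x powr (1 / (real k - 1))) powr real (k - 1)"
      by (rule powr_realpow[symmetric]) (use xp in simp)
    also have "\<dots> = x powr ((1 / (real k - 1)) * real (k - 1))" by (rule powr_powr)
    also have "(1 / (real k - 1)) * real (k - 1) = 1" using k unfolding k_def by (simp add: of_nat_diff)
    finally show ?thesis using xp by simp
  qed
  have "real (Ncount_e n G Y e) = 2 * real k * np * x" unfolding x_def using np kpos by simp
  then show ?thesis unfolding r[symmetric] k_def[symmetric] np_def[symmetric] using rk r by simp
qed



lemma bern:
  fixes \<eta>' :: real
  assumes "m \<le> L" "real L * real L \<le> \<eta>' * real n" "m \<le> n" "n \<ge> 1"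
  shows "(1 - \<eta>') * real n ^ (m-2) \<le> real ((n - m)^(m-2))"
proof -
  have rn: "real n > 0" using assms by simp
  have "real ((n - m)^(m-2)) = (real n - real m)^(m-2)" using assms by (simp add: of_nat_diff)
  also have "real n - real m = real n * (1 + (- real m / real n))" using rn by (simp add: field_simps)
  also have "(real n * (1 + (- real m / real n)))^(m-2) = real n^(m-2) * (1 + (- real m / real n))^(m-2)"
    by (simp add: power_mult_distrib)
  finally have eq: "real ((n - m)^(m-2)) = real n^(m-2) * (1 + (- real m / real n))^(m-2)" .
  have "-1 \<le> - real m / real n" using assms rn by (simp add: field_simps)
  then have B: "1 + real (m-2) * (- real m / real n) \<le> (1 + (- real m / real n))^(m-2)"
    by (rule Bernoulli_inequality)
  have "real (m-2) * real m \<le> real L * real L"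
    using assms by (intro mult_mono) auto
  also have "\<dots> \<le> \<eta>' * real n" by fact
  finally have "real (m-2) * real m / real n \<le> \<eta>'" using rn by (simp add: field_simps)
  then have "1 - \<eta>' \<le> 1 + real (m-2) * (- real m / real n)" by (simp add: field_simps)
  with B have "1 - \<eta>' \<le> (1 + (- real m / real n))^(m-2)" by linarith
  then have "real n^(m-2) * (1 - \<eta>') \<le> real n^(m-2) * (1 + (- real m / real n))^(m-2)"
    using rn by (intro mult_left_mono) auto
  then show ?thesis unfolding eq by (simp add: mult.commute)
qed

lemma np_pow: "n \<ge> 1 \<Longrightarrow> m \<ge> 2 \<Longrightarrow> real n powr (real m - 2) = real n ^ (m - 2)"
  by (subst powr_realpow[symmetric]) (auto simp: of_nat_diff)

lemma pairs_m2: "c \<in> pairs m \<Longrightarrow> m \<ge> 2"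
  by (auto simp: pairs_def)

lemma finite_graph: "is_graph G \<Longrightarrow> finite (snd G)"
  unfolding is_graph_def by (rule finite_edges)

lemma term_bound:
  fixes \<beta> p \<epsilon> \<eta>' :: real
  assumes G: "is_graph G" "fst G \<le> L" and n: "n \<ge> 1" "n \<ge> L" and e: "e' \<in> pairs n"
    and hr: "card (snd G) \<ge> 2 \<Longrightarrow> \<bar>rG n G Y e' - p\<bar> < \<epsilon>" and p: "0 \<le> p" and eps: "\<epsilon> \<le> 1" "\<epsilon> > 0"
    and nb: "real L * real L \<le> \<eta>' * real n" and eta: "\<eta>' \<ge> 0"
  shows "\<bar>\<beta> * real (Ncount_e n G Y e') / real n powr (real (fst G) - 2)
            - 2 * \<beta> * real (card (snd G)) * p ^ (card (snd G) - 1)\<bar>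
         \<le> \<bar>\<beta>\<bar> * (2 * \<eta>' + 2 * real (card (snd G)) * (real (card (snd G) - 1) * (p+1) ^ (card (snd G) - 1 - 1)) * \<epsilon>)"
proof -
  define k where "k = card (snd G)"
  define m where "m = fst G"
  have fin: "finite (snd G)" using G(1) by (rule finite_graph)
  have Gsub: "snd G \<subseteq> pairs (fst G)" using G by (simp add: is_graph_def)
  have rhs0: "0 \<le> \<bar>\<beta>\<bar> * (2 * \<eta>' + 2 * real k * (real (k - 1) * (p+1) ^ (k - 1 - 1)) * \<epsilon>)"
    using eta p eps by (intro mult_nonneg_nonneg add_nonneg_nonneg) auto
  consider "k = 0" | "k = 1" | "k \<ge> 2" by linarith
  then show ?thesis
  proof cases
    case 1
    then have "snd G = {}" using fin unfolding k_def by simp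
    then have "Ncount_e n G Y e' = 0" using Ncount_e_empty[of n "fst G" Y e'] by (metis prod.collapse)
    then show ?thesis using rhs0 1 unfolding k_def by simp
  next
    case 2
    then obtain c where c: "snd G = {c}" unfolding k_def by (rule card_1_singletonE)
    have cp: "c \<in> pairs m" using Gsub c unfolding m_def by auto
    have m2: "m \<ge> 2" using cp by (rule pairs_m2)
    have Gc: "G = (m, {c})" using c unfolding m_def by (metis prod.collapse)
    have N: "Ncount_e n G Y e' = card (SS n m c e')" unfolding Gc by (rule Ncount_e_single)
    have np: "real n powr (real m - 2) = real n ^ (m - 2)" using n(1) m2 by (rule np_pow)
    have npos: "real n ^ (m - 2) > 0" using n by simp
    have up: "real (card (SS n m c e')) \<le> 2 * real n ^ (m - 2)"
      using SS_upper[OF cp e] by (metis of_nat_le_iff of_nat_mult of_nat_numeral of_nat_power)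
    have lo0: "real (2 * (n - m) ^ (m - 2)) \<le> real (card (SS n m c e'))"
      using SS_lower[OF cp e] by (rule of_nat_mono)
    have "(1 - \<eta>') * real n ^ (m-2) \<le> real ((n - m)^(m-2))"
      using G(2) nb n unfolding m_def by (intro bern) auto
    with lo0 have lo: "2 * (1 - \<eta>') * real n ^ (m - 2) \<le> real (card (SS n m c e'))"
      by (simp only: of_nat_mult of_nat_numeral mult.assoc)
    define q where "q = real (card (SS n m c e')) / real n ^ (m - 2)"
    have q1: "q \<le> 2" unfolding q_def using up npos by (simp add: divide_le_eq)
    have q2: "2 * (1 - \<eta>') \<le> q" unfolding q_def using lo npos by (simp add: le_divide_eq)
    have "\<bar>\<beta> * real (Ncount_e n G Y e') / real n powr (real (fst G) - 2)
            - 2 * \<beta> * real (card (snd G)) * p ^ (card (snd G) - 1)\<bar> = \<bar>\<beta>\<bar> * \<bar>q - 2\<bar>"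
      unfolding N q_def using 2 np unfolding k_def m_def by (simp add: abs_mult[symmetric] algebra_simps)
    also have "\<dots> \<le> \<bar>\<beta>\<bar> * (2 * \<eta>')" using q1 q2 by (intro mult_left_mono) auto
    also have "\<dots> \<le> \<bar>\<beta>\<bar> * (2 * \<eta>' + 2 * real k * (real (k - 1) * (p+1) ^ (k - 1 - 1)) * \<epsilon>)"
      using 2 by simp
    finally show ?thesis unfolding k_def .
  next
    case 3
    define r where "r = rG n G Y e'"
    define np where "np = real n powr (real (fst G) - 2)"
    have npos: "np > 0" unfolding np_def using n by simp
    have N: "real (Ncount_e n G Y e') = 2 * real k * np * r ^ (k - 1)"
      unfolding r_def np_def k_def using rG_pow[of G n Y e'] 3 n unfolding k_def by simp
    have hr': "\<bar>r - p\<bar> < \<epsilon>" using hr 3 unfolding r_def k_def by simp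
    have r0: "r \<ge> 0" unfolding r_def rG_def by simp
    have r1: "r \<le> p + 1" using hr' eps by linarith
    have pd: "\<bar>r^(k-1) - p^(k-1)\<bar> \<le> real (k-1) * (p+1)^(k-1-1) * \<bar>r - p\<bar>"
      using powdiff[OF r0 r1 p, of "k-1"] by simp
    have "\<bar>\<beta> * real (Ncount_e n G Y e') / np - 2 * \<beta> * real k * p ^ (k - 1)\<bar>
        = \<bar>\<beta>\<bar> * (2 * real k) * \<bar>r^(k-1) - p^(k-1)\<bar>"
    proof -
      have "\<beta> * real (Ncount_e n G Y e') / np - 2 * \<beta> * real k * p ^ (k - 1)
          = (\<beta> * (2 * real k)) * (r^(k-1) - p^(k-1))"
        unfolding N using npos by (simp add: field_simps)
      then show ?thesis by (simp add: abs_mult)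
    qed
    also have "\<dots> \<le> \<bar>\<beta>\<bar> * (2 * real k) * (real (k-1) * (p+1)^(k-1-1) * \<epsilon>)"
    proof (rule mult_left_mono)
      have "real (k-1) * (p+1)^(k-1-1) * \<bar>r - p\<bar> \<le> real (k-1) * (p+1)^(k-1-1) * \<epsilon>"
        using hr' p by (intro mult_left_mono) auto
      then show "\<bar>r^(k-1) - p^(k-1)\<bar> \<le> real (k-1) * (p+1)^(k-1-1) * \<epsilon>" using pd by linarith
    qed simp
    also have "\<dots> \<le> \<bar>\<beta>\<bar> * (2 * \<eta>' + 2 * real k * (real (k - 1) * (p+1) ^ (k - 1 - 1)) * \<epsilon>)"
      using eta by (simp add: algebra_simps)
    finally show ?thesis unfolding np_def k_def .
  qed
qed

lemma diff_term_bound: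
  fixes \<beta> p \<epsilon> :: real
  assumes G: "is_graph G" "fst G \<le> L" and n: "n \<ge> 1" and e: "e \<in> pairs n"
    and X: "Xm \<subseteq> Xp" "Xp - Xm = {e}"
    and hyp: "\<forall>G'\<in>HL L. \<bar>rG n G' Xp e - p\<bar> < \<epsilon>" and p: "0 \<le> p" and eps: "\<epsilon> > 0"
    and beta: "card (snd G) \<ge> 2 \<Longrightarrow> \<beta> > 0"
  shows "\<bar>\<beta>\<bar> / real n powr (real (fst G) - 2) * (\<Sum>e'\<in>pairs n - {e}. real (card (SE n G Xp e' - SE n G Xm e')))
         \<le> 2 * \<beta> * real (card (snd G)) * (real (card (snd G) - 1) * (p + \<epsilon>) ^ (card (snd G) - 1 - 1))"
proof -
  define k where "k = card (snd G)"
  define m where "m = fst G"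
  define np where "np = real n powr (real (fst G) - 2)"
  have npos: "np > 0" unfolding np_def using n by simp
  have fin: "finite (snd G)" using G(1) by (rule finite_graph)
  have Gsub: "snd G \<subseteq> pairs (fst G)" using G by (simp add: is_graph_def)
  define S where "S = (\<Sum>e'\<in>pairs n - {e}. real (card (SE n G Xp e' - SE n G Xm e')))"
  define Nb where "Nb b = real (Ncount_e n (m, snd G - {b}) Xp e)" for b
  have S0: "S \<ge> 0" unfolding S_def by (rule sum_nonneg) simp
  have SN: "S \<le> (\<Sum>b\<in>snd G. Nb b)"
  proof -
    have "(\<Sum>e'\<in>pairs n - {e}. card (SE n G Xp e' - SE n G Xm e'))
        \<le> (\<Sum>b\<in>snd G. Ncount_e n (fst G, snd G - {b}) Xp e)"
      by (rule diffsum[OF Gsub X])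
    then have "real (\<Sum>e'\<in>pairs n - {e}. card (SE n G Xp e' - SE n G Xm e'))
        \<le> real (\<Sum>b\<in>snd G. Ncount_e n (fst G, snd G - {b}) Xp e)"
      by (rule of_nat_mono)
    then show ?thesis unfolding S_def Nb_def m_def by simp
  qed
  have lhs: "\<bar>\<beta>\<bar> / np * S \<le> \<bar>\<beta>\<bar> / np * (\<Sum>b\<in>snd G. Nb b)"
    using SN npos by (intro mult_left_mono) auto
  consider "k \<le> 1" | "k = 2" | "k \<ge> 3" by linarith
  then show ?thesis
  proof cases
    case 1
    have "Nb b = 0" if b: "b \<in> snd G" for b
    proof -
      have "card (snd G - {b}) = 0" using 1 b fin unfolding k_def by simp
      then have "snd G - {b} = {}" using fin by simp
      then show ?thesis unfolding Nb_def by (metis Ncount_e_empty of_nat_0)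
    qed
    then have "(\<Sum>b\<in>snd G. Nb b) = 0" by simp
    then have "S \<le> 0" using SN by simp
    then have "\<bar>\<beta>\<bar> / np * S \<le> 0" using npos by (intro mult_nonneg_nonpos) auto
    moreover have "real (k - 1) = 0" using 1 by simp
    ultimately show ?thesis unfolding np_def S_def k_def by simp
  next
    case 2
    have bpos: "\<beta> > 0" using beta 2 unfolding k_def by simp
    have Nb: "Nb b \<le> 2 * np" if b: "b \<in> snd G" for b
    proof -
      have "card (snd G - {b}) = 1" using 2 b fin unfolding k_def by simp
      then obtain c where c: "snd G - {b} = {c}" by (rule card_1_singletonE)
      have cp: "c \<in> pairs m" using Gsub c unfolding m_def by blast
      have m2: "m \<ge> 2" using cp by (rule pairs_m2)
      have "Nb b = real (card (SS n m c e))" unfolding Nb_def c by (simp add: Ncount_e_single)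
      also have "\<dots> \<le> 2 * real n ^ (m - 2)"
        using SS_upper[OF cp e] by (metis of_nat_le_iff of_nat_mult of_nat_numeral of_nat_power)
      also have "real n ^ (m - 2) = np" unfolding np_def m_def[symmetric] using np_pow[OF n m2] by simp
      finally show ?thesis .
    qed
    have "(\<Sum>b\<in>snd G. Nb b) \<le> real (card (snd G)) * (2 * np)"
      by (rule sum_bounded_above) (use Nb in auto)
    then have "(\<Sum>b\<in>snd G. Nb b) \<le> 4 * np" using 2 unfolding k_def by simp
    then have "\<bar>\<beta>\<bar> / np * (\<Sum>b\<in>snd G. Nb b) \<le> \<bar>\<beta>\<bar> / np * (4 * np)"
      using npos by (intro mult_left_mono) auto
    also have "\<dots> = 4 * \<beta>" using npos bpos by simp
    finally have "\<bar>\<beta>\<bar> / np * S \<le> 4 * \<beta>" using lhs by linarith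
    then show ?thesis using 2 unfolding np_def S_def k_def by simp
  next
    case 3
    have bpos: "\<beta> > 0" using beta 3 unfolding k_def by simp
    have Nb: "Nb b \<le> 2 * real (k - 1) * np * (p + \<epsilon>) ^ (k - 1 - 1)" if b: "b \<in> snd G" for b
    proof -
      define G' where "G' = (m, snd G - {b})"
      have ck: "card (snd G') = k - 1" unfolding G'_def k_def using b fin by simp
      have HL: "G' \<in> HL L" unfolding HL_def is_graph_def G'_def using Gsub G(2) ck 3
        unfolding m_def k_def G'_def by auto
      have r: "\<bar>rG n G' Xp e - p\<bar> < \<epsilon>" using hyp HL by blast
      have r0: "rG n G' Xp e \<ge> 0" unfolding rG_def by simp
      have rle: "rG n G' Xp e \<le> p + \<epsilon>" using r by linarith
      have "Nb b = 2 * real (k - 1) * np * (rG n G' Xp e) ^ (k - 1 - 1)"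
        unfolding Nb_def using rG_pow[of G' n Xp e] ck 3 n unfolding G'_def np_def m_def by simp
      also have "\<dots> \<le> 2 * real (k - 1) * np * (p + \<epsilon>) ^ (k - 1 - 1)"
        using npos r0 rle by (intro mult_left_mono power_mono) auto
      finally show ?thesis .
    qed
    have "(\<Sum>b\<in>snd G. Nb b) \<le> real (card (snd G)) * (2 * real (k - 1) * np * (p + \<epsilon>) ^ (k - 1 - 1))"
      by (rule sum_bounded_above) (use Nb in auto)
    then have "\<bar>\<beta>\<bar> / np * (\<Sum>b\<in>snd G. Nb b) \<le> \<bar>\<beta>\<bar> / np * (real k * (2 * real (k - 1) * np * (p + \<epsilon>) ^ (k - 1 - 1)))"
      using npos unfolding k_def by (intro mult_left_mono) auto
    also have "\<dots> = 2 * \<beta> * real k * (real (k - 1) * (p + \<epsilon>) ^ (k - 1 - 1))" using npos bpos by simp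
    finally show ?thesis using lhs unfolding np_def S_def k_def by linarith
  qed
qed



definition hh :: "nat \<Rightarrow> (nat \<Rightarrow> pgraph) \<Rightarrow> (nat \<Rightarrow> real) \<Rightarrow> nat \<Rightarrow> nat set set \<Rightarrow> nat set \<Rightarrow> real" where
  "hh s Gs \<beta> n X e = Ham s Gs \<beta> n (insert e X) - Ham s Gs \<beta> n (X - {e})"

lemma glauber_sig: "glauber_step s Gs \<beta> n X e u =
   (if u \<le> sig (hh s Gs \<beta> n X e) then insert e X else X - {e})"
  by (simp add: glauber_step_def sig_def Let_def hh_def)

lemma glauber_same: "Xp = insert e Xm \<Longrightarrow> glauber_step s Gs \<beta> n Xp e u = glauber_step s Gs \<beta> n Xm e u"
proof -
  assume a: "Xp = insert e Xm"
  have "insert e Xm - {e} = Xm - {e}" by auto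
  then show ?thesis using a by (simp add: glauber_step_def Let_def)
qed

lemma ham_one1: "e \<notin> Xm \<Longrightarrow> e' \<noteq> e \<Longrightarrow> hamming (insert e' (insert e Xm)) (insert e' Xm) = 1"
proof -
  assume a: "e \<notin> Xm" "e' \<noteq> e"
  have "(insert e' (insert e Xm) - insert e' Xm) \<union> (insert e' Xm - insert e' (insert e Xm)) = {e}"
    using a by auto
  then show ?thesis unfolding hamming_def by simp
qed

lemma ham_one2: "e \<notin> Xm \<Longrightarrow> e' \<noteq> e \<Longrightarrow> hamming (insert e Xm - {e'}) (Xm - {e'}) = 1"
proof -
  assume a: "e \<notin> Xm" "e' \<noteq> e"
  have "(insert e Xm - {e'} - (Xm - {e'})) \<union> ((Xm - {e'}) - (insert e Xm - {e'})) = {e}"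
    using a by auto
  then show ?thesis unfolding hamming_def by simp
qed

lemma ham_two: "(A - B) \<union> (B - A) \<subseteq> {e, e'} \<Longrightarrow> hamming A B \<le> 2"
proof -
  assume a: "(A - B) \<union> (B - A) \<subseteq> {e, e'}"
  have "card ((A - B) \<union> (B - A)) \<le> card {e, e'}" by (rule card_mono[OF _ a]) simp
  also have "\<dots> \<le> 2" by (simp add: card_insert_le_m1)
  finally show ?thesis unfolding hamming_def .
qed

lemma hamming_bound:
  assumes "e \<notin> Xm" "e' \<noteq> e"
  shows "real (hamming (glauber_step s Gs \<beta> n (insert e Xm) e' u) (glauber_step s Gs \<beta> n Xm e' u))
     \<le> 1 + indicator {min (sig (hh s Gs \<beta> n (insert e Xm) e')) (sig (hh s Gs \<beta> n Xm e')) <..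
                       max (sig (hh s Gs \<beta> n (insert e Xm) e')) (sig (hh s Gs \<beta> n Xm e'))} u"
proof -
  define tp where "tp = sig (hh s Gs \<beta> n (insert e Xm) e')"
  define tm where "tm = sig (hh s Gs \<beta> n Xm e')"
  have t2a: "hamming (insert e' (insert e Xm)) (Xm - {e'}) \<le> 2"
    by (rule ham_two[of _ _ e e']) auto
  have t2b: "hamming (insert e Xm - {e'}) (insert e' Xm) \<le> 2"
    by (rule ham_two[of _ _ e e']) auto
  show ?thesis
    unfolding glauber_sig tp_def[symmetric] tm_def[symmetric]
    using ham_one1[OF assms] ham_one2[OF assms] t2a t2b
    by (cases "u \<le> tp"; cases "u \<le> tm") (auto simp: indicator_def)
qed

lemma coupled_term_bound:
  assumes "e \<notin> Xm" "e' \<noteq> e"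
  shows "integral\<^sup>L (uniform_measure lborel {0..1}) (\<lambda>u. real (hamming (glauber_step s Gs \<beta> n (insert e Xm) e' u) (glauber_step s Gs \<beta> n Xm e' u)))
     \<le> 1 + \<bar>sig (hh s Gs \<beta> n (insert e Xm) e') - sig (hh s Gs \<beta> n Xm e')\<bar>"
proof -
  have "integral\<^sup>L (uniform_measure lborel {0..1}) (\<lambda>u. real (hamming (glauber_step s Gs \<beta> n (insert e Xm) e' u) (glauber_step s Gs \<beta> n Xm e' u)))
     \<le> 1 + (max (sig (hh s Gs \<beta> n (insert e Xm) e')) (sig (hh s Gs \<beta> n Xm e')) - min (sig (hh s Gs \<beta> n (insert e Xm) e')) (sig (hh s Gs \<beta> n Xm e')))"
    by (rule integral_bound) (use hamming_bound[OF assms] in auto)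
  also have "\<dots> = 1 + \<bar>sig (hh s Gs \<beta> n (insert e Xm) e') - sig (hh s Gs \<beta> n Xm e')\<bar>" by simp
  finally show ?thesis .
qed

lemma coupled_term_zero:
  assumes "Xp = insert e Xm"
  shows "integral\<^sup>L (uniform_measure lborel {0..1}) (\<lambda>u. real (hamming (glauber_step s Gs \<beta> n Xp e u) (glauber_step s Gs \<beta> n Xm e u))) = 0"
  using glauber_same[OF assms] by (simp add: hamming_def)

lemma card_pairs_le: "card (pairs n) \<le> n * n"
proof -
  have "pairs n \<subseteq> (\<lambda>(i,j). {i,j}) ` ({1..n} \<times> {1..n})" unfolding pairs_def by auto
  then have "card (pairs n) \<le> card ((\<lambda>(i,j). {i,j}) ` ({1..n} \<times> {1..n}))" by (intro card_mono) auto
  also have "\<dots> \<le> card ({1..n} \<times> {1..n})" by (rule card_image_le) simp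
  also have "\<dots> = n * n" by simp
  finally show ?thesis .
qed



theorem mainTheorem9:
  fixes s L :: nat and Gs :: "nat \<Rightarrow> pgraph" and \<beta> :: "nat \<Rightarrow> real" and pstar :: real
  assumes "s \<ge> 1"
    and "\<forall>i \<in> {1..s}. is_graph (Gs i)"
    and "Gs 1 = (2, {{1, 2}})"
    and "\<forall>i \<in> {1..s}. fst (Gs i) \<le> L"
    and "\<forall>i \<in> {2..s}. \<beta> i > 0"
    and "pstar \<in> {0..1}"
    and "phi s Gs \<beta> pstar = pstar"
    and "0 < deriv (phi s Gs \<beta>) pstar" and "deriv (phi s Gs \<beta>) pstar < 1"
  shows "\<exists>\<epsilon>>0. \<exists>\<delta>>0. \<exists>N0. \<forall>n \<ge> N0. \<forall>Xp Xm e.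
           Xp \<subseteq> pairs n \<and> Xm \<subseteq> Xp \<and> e \<in> pairs n \<and> Xp - Xm = {e} \<and>
           (\<forall>Y \<in> {Xp, Xm}. \<forall>G \<in> HL L. \<forall>e' \<in> pairs n. \<bar>rG n G Y e' - pstar\<bar> < \<epsilon>)
           \<longrightarrow> coupled_exp_dist s Gs \<beta> n Xp Xm \<le> 1 - \<delta> / real n ^ 2"
proof -
  define k where "k i = card (snd (Gs i))" for i
  define Dp where "Dp p = (\<Sum>i=1..s. 2 * \<beta> i * real (k i) * (real (k i - 1) * p ^ (k i - 1 - 1)))" for p
  define x0 where "x0 = Psi s Gs \<beta> pstar"
  have k1: "k 1 = 1" using assms(3) unfolding k_def by simp
  have p0: "0 \<le> pstar" using assms(6) by simp
  have dPsi0: "(Psi s Gs \<beta> has_real_derivative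
      (\<Sum>i=1..s. 2 * \<beta> i * real (card (snd (Gs i))) * (real (card (snd (Gs i)) - 1) * p ^ (card (snd (Gs i)) - 1 - Suc 0)))) (at p)" for p
    unfolding Psi_def[abs_def] by (intro DERIV_sum DERIV_cmult DERIV_pow)
  have dPsi: "(Psi s Gs \<beta> has_real_derivative Dp p) (at p)" for p
    using dPsi0[of p] by (simp add: Dp_def k_def)
  have phi_eq: "phi s Gs \<beta> = (\<lambda>p. sig (Psi s Gs \<beta> p))" by (rule ext) (simp add: phi_def sig_def)
  have dphi: "(phi s Gs \<beta> has_real_derivative sigd x0 * Dp pstar) (at pstar)"
    unfolding phi_eq x0_def by (rule DERIV_chain2[OF sig_deriv dPsi])
  have qlt: "sigd x0 * Dp pstar < 1" using DERIV_imp_deriv[OF dphi] assms(9) by simp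
  have b0: "Dp pstar \<ge> 0" unfolding Dp_def
  proof (rule sum_nonneg)
    fix i assume i: "i \<in> {1..s}"
    show "0 \<le> 2 * \<beta> i * real (k i) * (real (k i - 1) * pstar ^ (k i - 1 - 1))"
    proof (cases "k i \<ge> 2")
      case True
      then have "i \<noteq> 1" using k1 by auto
      then have "\<beta> i > 0" using assms(5) i by auto
      then show ?thesis using p0 by simp
    next
      case False
      then have "real (k i - 1) = 0" by simp
      then show ?thesis by simp
    qed
  qed
  define a where "a = sigd x0"
  define b where "b = Dp pstar"
  have a0: "a > 0" unfolding a_def by (rule sigd_pos)
  have ab1: "a * b < 1" using qlt unfolding a_def b_def .
  define \<tau> where "\<tau> = min 1 ((1 - a * b) / (2 * (a + b + 1)))"
  have tau0: "\<tau> > 0" unfolding \<tau>_def using a0 b0 ab1 b_def by simp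
  have tau1: "\<tau> \<le> 1" unfolding \<tau>_def by simp
  have tau2: "\<tau> * (a + b + 1) \<le> (1 - a * b) / 2"
  proof -
    have "\<tau> \<le> (1 - a * b) / (2 * (a + b + 1))" unfolding \<tau>_def by simp
    then have "\<tau> * (a + b + 1) \<le> (1 - a * b) / (2 * (a + b + 1)) * (a + b + 1)"
      using a0 b0 b_def by (intro mult_right_mono) auto
    also have "\<dots> = (1 - a * b) / 2" using a0 b0 b_def by (simp add: field_simps)
    finally show ?thesis .
  qed
  have tab: "(a + \<tau>) * (b + \<tau>) < 1"
  proof -
    have q1: "(a + \<tau>) * (b + \<tau>) = a * b + \<tau> * (a + b + \<tau>)" by (simp add: algebra_simps)
    have q2: "\<tau> * (a + b + \<tau>) \<le> \<tau> * (a + b + 1)" using tau0 tau1 by (intro mult_left_mono) auto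
    show ?thesis using q1 q2 tau2 ab1 by argo
  qed
  define \<delta> where "\<delta> = 1 - (a + \<tau>) * (b + \<tau>)"
  have d0: "\<delta> > 0" unfolding \<delta>_def using tab by simp
  obtain \<eta> where eta0: "\<eta> > 0" and eta: "\<And>z. \<bar>z - x0\<bar> < \<eta> \<Longrightarrow> \<bar>sigd z - a\<bar> < \<tau>"
    using isCont_sigd[of x0, unfolded continuous_at_eps_delta] tau0 unfolding a_def dist_real_def by blast
  have cDp: "isCont Dp pstar" unfolding Dp_def by (intro continuous_intros)
  obtain \<epsilon>1 where e10: "\<epsilon>1 > 0" and e1: "\<And>p. \<bar>p - pstar\<bar> < \<epsilon>1 \<Longrightarrow> \<bar>Dp p - b\<bar> < \<tau>"
    using cDp[unfolded continuous_at_eps_delta] tau0 unfolding b_def dist_real_def by blast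
  define C1 where "C1 = (\<Sum>i=1..s. \<bar>\<beta> i\<bar> * (2 * real (k i) * (real (k i - 1) * (pstar+1)^(k i - 1 - 1))))"
  define Bb where "Bb = (\<Sum>i=1..s. \<bar>\<beta> i\<bar>)"
  have C10: "C1 \<ge> 0" unfolding C1_def using p0 by (intro sum_nonneg mult_nonneg_nonneg) auto
  have Bb0: "Bb \<ge> 0" unfolding Bb_def by (intro sum_nonneg) auto
  define \<epsilon> where "\<epsilon> = min (min (\<epsilon>1/2) 1) (\<eta> / (2*(C1+1)))"
  define \<eta>' where "\<eta>' = \<eta> / (4*(Bb+1))"
  define N0 where "N0 = nat \<lceil>real L * real L / \<eta>'\<rceil> + L + 2"
  have eps0: "\<epsilon> > 0" unfolding \<epsilon>_def using e10 eta0 C10 by simp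
  have eps1: "\<epsilon> \<le> 1" unfolding \<epsilon>_def by simp
  have epsl: "\<epsilon> < \<epsilon>1" unfolding \<epsilon>_def using e10 by simp
  have epsC: "C1 * \<epsilon> < \<eta> / 2"
  proof -
    have "\<epsilon> \<le> \<eta> / (2*(C1+1))" unfolding \<epsilon>_def by simp
    then have "C1 * \<epsilon> \<le> C1 * (\<eta> / (2*(C1+1)))" using C10 by (intro mult_left_mono) auto
    also have "\<dots> = (\<eta> / 2) * (C1 / (C1 + 1))" using C10 by (simp add: field_simps)
    also have "\<dots> < \<eta> / 2" using C10 eta0 by (simp add: field_simps)
    finally show ?thesis .
  qed
  have eta'0: "\<eta>' > 0" unfolding \<eta>'_def using eta0 Bb0 by simp
  have etaB: "2 * \<eta>' * Bb < \<eta> / 2"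
  proof -
    have "2 * \<eta>' * Bb = (\<eta> / 2) * (Bb / (Bb + 1))" unfolding \<eta>'_def using Bb0 by (simp add: field_simps)
    also have "\<dots> < \<eta> / 2" using Bb0 eta0 by (simp add: field_simps)
    finally show ?thesis .
  qed
  have Dpe: "Dp (pstar + \<epsilon>) \<le> b + \<tau>" using e1[of "pstar + \<epsilon>"] epsl eps0 by simp
  show ?thesis
  proof (rule exI[of _ \<epsilon>], rule conjI[OF eps0], rule exI[of _ \<delta>], rule conjI[OF d0], rule exI[of _ N0], intro allI impI)
    fix n Xp Xm e
    assume nN: "N0 \<le> n" and H: "Xp \<subseteq> pairs n \<and> Xm \<subseteq> Xp \<and> e \<in> pairs n \<and> Xp - Xm = {e} \<and>
           (\<forall>Y\<in>{Xp, Xm}. \<forall>G\<in>HL L. \<forall>e'\<in>pairs n. \<bar>rG n G Y e' - pstar\<bar> < \<epsilon>)"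
    have Xsub: "Xm \<subseteq> Xp" using conjunct1[OF conjunct2[OF H]] .
    have e: "e \<in> pairs n" using conjunct1[OF conjunct2[OF conjunct2[OF H]]] .
    have Xd: "Xp - Xm = {e}" using conjunct1[OF conjunct2[OF conjunct2[OF conjunct2[OF H]]]] .
    have HY: "\<forall>Y\<in>{Xp, Xm}. \<forall>G\<in>HL L. \<forall>e'\<in>pairs n. \<bar>rG n G Y e' - pstar\<bar> < \<epsilon>"
      using conjunct2[OF conjunct2[OF conjunct2[OF conjunct2[OF H]]]] .
    have n1: "n \<ge> 1" and nL: "n \<ge> L" using nN unfolding N0_def by auto
    have nb: "real L * real L \<le> \<eta>' * real n"
    proof -
      have c1: "real L * real L / \<eta>' \<le> real (nat \<lceil>real L * real L / \<eta>'\<rceil>)" by (rule real_nat_ceiling_ge)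
      have c2: "nat \<lceil>real L * real L / \<eta>'\<rceil> \<le> n" using nN unfolding N0_def by linarith
      have "real L * real L / \<eta>' \<le> real n" using c1 c2 by (meson of_nat_le_iff order_trans)
      then show ?thesis using eta'0 by (simp add: pos_divide_le_eq mult.commute)
    qed
    have eXp: "e \<in> Xp" using Xd by auto
    have eXm: "e \<notin> Xm" using Xd by auto
    have Xp_eq: "Xp = insert e Xm"
    proof (rule set_eqI)
      fix x show "x \<in> Xp \<longleftrightarrow> x \<in> insert e Xm" using Xd Xsub eXp by auto
    qed
    have hh_eq: "hh s Gs \<beta> n Y e' = (\<Sum>i=1..s. \<beta> i * real (Ncount_e n (Gs i) Y e') / real n powr (real (fst (Gs i)) - 2))" for Y e'
      unfolding hh_def by (rule Ham_diff)
    have x0_eq: "x0 = (\<Sum>i=1..s. 2 * \<beta> i * real (k i) * pstar ^ (k i - 1))"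
      unfolding x0_def Psi_def k_def by simp
    have GHL: "Gs i \<in> HL L" if "i \<in> {1..s}" "k i \<ge> 2" for i
      using assms(2,4) that unfolding HL_def k_def by auto
    have closeA: "\<bar>hh s Gs \<beta> n Y e' - x0\<bar> < \<eta>" if Y: "Y \<in> {Xp, Xm}" and e': "e' \<in> pairs n" for Y e'
    proof -
      have "\<bar>hh s Gs \<beta> n Y e' - x0\<bar> = \<bar>\<Sum>i=1..s. (\<beta> i * real (Ncount_e n (Gs i) Y e') / real n powr (real (fst (Gs i)) - 2)
              - 2 * \<beta> i * real (k i) * pstar ^ (k i - 1))\<bar>"
        unfolding hh_eq x0_eq sum_subtractf by simp
      also have "\<dots> \<le> (\<Sum>i=1..s. \<bar>\<beta> i * real (Ncount_e n (Gs i) Y e') / real n powr (real (fst (Gs i)) - 2)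
              - 2 * \<beta> i * real (k i) * pstar ^ (k i - 1)\<bar>)" by (rule sum_abs)
      also have "\<dots> \<le> (\<Sum>i=1..s. \<bar>\<beta> i\<bar> * (2 * \<eta>' + 2 * real (k i) * (real (k i - 1) * (pstar+1) ^ (k i - 1 - 1)) * \<epsilon>))"
      proof (rule sum_mono)
        fix i assume i: "i \<in> {1..s}"
        have hr: "\<bar>rG n (Gs i) Y e' - pstar\<bar> < \<epsilon>" if "card (snd (Gs i)) \<ge> 2"
          using HY Y e' GHL[OF i] that unfolding k_def by blast
        show "\<bar>\<beta> i * real (Ncount_e n (Gs i) Y e') / real n powr (real (fst (Gs i)) - 2)
              - 2 * \<beta> i * real (k i) * pstar ^ (k i - 1)\<bar>
              \<le> \<bar>\<beta> i\<bar> * (2 * \<eta>' + 2 * real (k i) * (real (k i - 1) * (pstar+1) ^ (k i - 1 - 1)) * \<epsilon>)"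
          unfolding k_def
          by (rule term_bound[OF _ _ n1 nL e' hr p0 eps1 eps0 nb less_imp_le[OF eta'0]]) (use assms(2,4) i in auto)
      qed
      also have "\<dots> = 2 * \<eta>' * Bb + C1 * \<epsilon>"
        unfolding Bb_def C1_def by (simp add: sum_distrib_left sum_distrib_right sum.distrib algebra_simps)
      also have "\<dots> < \<eta>" using etaB epsC by linarith
      finally show ?thesis .
    qed
    define np where "np i = real n powr (real (fst (Gs i)) - 2)" for i
    define cd where "cd i e' = real (card (SE n (Gs i) Xp e' - SE n (Gs i) Xm e'))" for i e'
    have cd_eq: "cd i e' = real (Ncount_e n (Gs i) Xp e') - real (Ncount_e n (Gs i) Xm e')" for i e'
    proof -
      have sub: "SE n (Gs i) Xm e' \<subseteq> SE n (Gs i) Xp e'" by (rule SE_mono[OF Xsub])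
      have "card (SE n (Gs i) Xp e' - SE n (Gs i) Xm e') = card (SE n (Gs i) Xp e') - card (SE n (Gs i) Xm e')"
        by (rule card_Diff_subset[OF finite_SE sub])
      moreover have "card (SE n (Gs i) Xm e') \<le> card (SE n (Gs i) Xp e')" by (rule card_mono[OF finite_SE sub])
      ultimately show ?thesis unfolding cd_def Ncount_e_SE by (simp add: of_nat_diff)
    qed
    have per: "\<bar>hh s Gs \<beta> n Xp e' - hh s Gs \<beta> n Xm e'\<bar> \<le> (\<Sum>i=1..s. \<bar>\<beta> i\<bar> / np i * cd i e')" for e'
    proof -
      have "hh s Gs \<beta> n Xp e' - hh s Gs \<beta> n Xm e' = (\<Sum>i=1..s. \<beta> i / np i * cd i e')"
        unfolding hh_eq sum_subtractf[symmetric] cd_eq np_def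
        by (rule sum.cong) (simp_all add: diff_divide_distrib[symmetric] algebra_simps)
      also have "\<bar>\<dots>\<bar> \<le> (\<Sum>i=1..s. \<bar>\<beta> i / np i * cd i e'\<bar>)" by (rule sum_abs)
      also have "\<dots> = (\<Sum>i=1..s. \<bar>\<beta> i\<bar> / np i * cd i e')"
        by (rule sum.cong) (simp_all add: abs_mult np_def cd_def)
      finally show ?thesis .
    qed
    have dsum: "(\<Sum>e'\<in>pairs n - {e}. \<bar>hh s Gs \<beta> n Xp e' - hh s Gs \<beta> n Xm e'\<bar>) \<le> Dp (pstar + \<epsilon>)"
    proof -
      have "(\<Sum>e'\<in>pairs n - {e}. \<bar>hh s Gs \<beta> n Xp e' - hh s Gs \<beta> n Xm e'\<bar>)
          \<le> (\<Sum>e'\<in>pairs n - {e}. \<Sum>i=1..s. \<bar>\<beta> i\<bar> / np i * cd i e')"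
        by (rule sum_mono) (rule per)
      also have "\<dots> = (\<Sum>i=1..s. \<bar>\<beta> i\<bar> / np i * (\<Sum>e'\<in>pairs n - {e}. cd i e'))"
        by (subst sum.swap) (simp add: sum_distrib_left)
      also have "\<dots> \<le> (\<Sum>i=1..s. 2 * \<beta> i * real (k i) * (real (k i - 1) * (pstar + \<epsilon>) ^ (k i - 1 - 1)))"
      proof (rule sum_mono)
        fix i assume i: "i \<in> {1..s}"
        have hyp: "\<forall>G'\<in>HL L. \<bar>rG n G' Xp e - pstar\<bar> < \<epsilon>" using HY e by blast
        have beta: "\<beta> i > 0" if "card (snd (Gs i)) \<ge> 2"
        proof -
          have "i \<noteq> 1" using k1 that unfolding k_def by auto
          then show ?thesis using assms(5) i by auto
        qed
        show "\<bar>\<beta> i\<bar> / np i * (\<Sum>e'\<in>pairs n - {e}. cd i e') \<le> 2 * \<beta> i * real (k i) * (real (k i - 1) * (pstar + \<epsilon>) ^ (k i - 1 - 1))"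
          unfolding np_def cd_def k_def
          by (rule diff_term_bound[OF _ _ n1 e Xsub Xd hyp p0 eps0 beta]) (use assms(2,4) i in auto)
      qed
      also have "\<dots> = Dp (pstar + \<epsilon>)" unfolding Dp_def by simp
      finally show ?thesis .
    qed
    have lipC: "\<bar>sig (hh s Gs \<beta> n Xp e') - sig (hh s Gs \<beta> n Xm e')\<bar> \<le> (a + \<tau>) * \<bar>hh s Gs \<beta> n Xp e' - hh s Gs \<beta> n Xm e'\<bar>"
      if e': "e' \<in> pairs n" for e'
    proof (rule sig_lip)
      fix z assume z1: "min (hh s Gs \<beta> n Xp e') (hh s Gs \<beta> n Xm e') \<le> z"
        and z2: "z \<le> max (hh s Gs \<beta> n Xp e') (hh s Gs \<beta> n Xm e')"
      have A1: "\<bar>hh s Gs \<beta> n Xp e' - x0\<bar> < \<eta>" by (rule closeA) (use e' in auto)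
      have A2: "\<bar>hh s Gs \<beta> n Xm e' - x0\<bar> < \<eta>" by (rule closeA) (use e' in auto)
      have "\<bar>z - x0\<bar> < \<eta>" using A1 A2 z1 z2 by (auto simp: min_def max_def split: if_splits)
      then have "\<bar>sigd z - a\<bar> < \<tau>" by (rule eta)
      then show "sigd z \<le> a + \<tau>" by linarith
    qed
    have sigsum: "(\<Sum>e'\<in>pairs n - {e}. \<bar>sig (hh s Gs \<beta> n Xp e') - sig (hh s Gs \<beta> n Xm e')\<bar>) \<le> 1 - \<delta>"
    proof -
      have "(\<Sum>e'\<in>pairs n - {e}. \<bar>sig (hh s Gs \<beta> n Xp e') - sig (hh s Gs \<beta> n Xm e')\<bar>)
         \<le> (\<Sum>e'\<in>pairs n - {e}. (a + \<tau>) * \<bar>hh s Gs \<beta> n Xp e' - hh s Gs \<beta> n Xm e'\<bar>)"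
        by (rule sum_mono) (rule lipC, simp)
      also have "\<dots> = (a + \<tau>) * (\<Sum>e'\<in>pairs n - {e}. \<bar>hh s Gs \<beta> n Xp e' - hh s Gs \<beta> n Xm e'\<bar>)"
        by (simp add: sum_distrib_left)
      also have "\<dots> \<le> (a + \<tau>) * (b + \<tau>)"
        using dsum Dpe a0 tau0 by (intro mult_left_mono) auto
      also have "\<dots> = 1 - \<delta>" unfolding \<delta>_def by simp
      finally show ?thesis .
    qed
    define g where "g e' = integral\<^sup>L (uniform_measure lborel {0..1})
          (\<lambda>u. real (hamming (glauber_step s Gs \<beta> n Xp e' u) (glauber_step s Gs \<beta> n Xm e' u)))" for e'
    define P where "P = card (pairs n)"
    have Pne: "pairs n \<noteq> {}" using e by auto
    have P0: "P > 0" unfolding P_def using Pne by (simp add: card_gt_0_iff)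
    have Pn: "real P \<le> real n ^ 2"
    proof -
      have "P \<le> n * n" unfolding P_def by (rule card_pairs_le)
      then have "real P \<le> real (n * n)" by (rule of_nat_mono)
      then show ?thesis by (simp add: power2_eq_square)
    qed
    have cexp: "coupled_exp_dist s Gs \<beta> n Xp Xm = (\<Sum>e'\<in>pairs n. g e') / real P"
      unfolding coupled_exp_dist_def g_def P_def by (rule exp_pmf_set[OF finite_pairs Pne])
    have ge: "g e = 0" unfolding g_def by (rule coupled_term_zero[OF Xp_eq])
    have gb: "g e' \<le> 1 + \<bar>sig (hh s Gs \<beta> n Xp e') - sig (hh s Gs \<beta> n Xm e')\<bar>" if "e' \<in> pairs n - {e}" for e'
    proof -
      have ne: "e' \<noteq> e" using that by simp
      show ?thesis unfolding g_def using coupled_term_bound[OF eXm ne, of s Gs \<beta> n]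
        unfolding Xp_eq[symmetric] .
    qed
    have "(\<Sum>e'\<in>pairs n. g e') = g e + (\<Sum>e'\<in>pairs n - {e}. g e')"
      by (rule sum.remove[OF finite_pairs e])
    also have "\<dots> \<le> 0 + (\<Sum>e'\<in>pairs n - {e}. 1 + \<bar>sig (hh s Gs \<beta> n Xp e') - sig (hh s Gs \<beta> n Xm e')\<bar>)"
      unfolding ge by (intro add_left_mono sum_mono gb)
    also have "\<dots> = real (card (pairs n - {e})) + (\<Sum>e'\<in>pairs n - {e}. \<bar>sig (hh s Gs \<beta> n Xp e') - sig (hh s Gs \<beta> n Xm e')\<bar>)"
      by (simp add: sum.distrib)
    also have "real (card (pairs n - {e})) = real P - 1"
      unfolding P_def using e P0 unfolding P_def by (simp add: card_Diff_singleton of_nat_diff)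
    finally have S: "(\<Sum>e'\<in>pairs n. g e') \<le> real P - \<delta>" using sigsum by linarith
    have "coupled_exp_dist s Gs \<beta> n Xp Xm \<le> (real P - \<delta>) / real P"
      unfolding cexp using S P0 by (intro divide_right_mono) auto
    also have "\<dots> = 1 - \<delta> / real P" using P0 by (simp add: field_simps)
    also have "\<dots> \<le> 1 - \<delta> / real n ^ 2"
    proof -
      have "\<delta> / real n ^ 2 \<le> \<delta> / real P" using Pn P0 d0 n1 by (intro divide_left_mono) (auto intro!: mult_pos_pos)
      then show ?thesis by linarith
    qed
    finally show "coupled_exp_dist s Gs \<beta> n Xp Xm \<le> 1 - \<delta> / real n ^ 2" .
  qed
qed

end
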